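(* Let $I\subset S=K[x_1,\dots,x_t]$ be an $\mathfrak m$-primary monomial ideal. Then there exists $s_0$ such that $v(I^{s+1})\ge v(I)$ for all $s\ge s_0$.
   Context: $K$ is a field, $S$ is standard graded and $\mathfrak m=\langle x_1,\dots,x_t\rangle$. For a proper graded ideal $I$, the $v$-number is $v(I)=\min\{k\ge 0 : \exists f\in S_k,\ \mathcal P\in\operatorname{Ass}(S/I) \text{ with } (I:f)=\mathcal P\}$. *)

theory Defs
  imports Main "HOL-Library.Poly_Mapping"
begin

text \<open>The polynomial ring S = K[x_v : v in 'v] over a field K, with a finite type 'v of
variables (t = CARD('v)).\<close>

type_synonym ('v, 'k) mpoly = "('v \<Rightarrow>\<^sub>0 nat) \<Rightarrow>\<^sub>0 'k"

definition is_ideal :: "('a::comm_ring_1) set \<Rightarrow> bool" where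
  "is_ideal I \<longleftrightarrow> 0 \<in> I \<and> (\<forall>a\<in>I. \<forall>b\<in>I. a + b \<in> I) \<and> (\<forall>a\<in>I. \<forall>r. r * a \<in> I)"

definition ideal_gen :: "('a::comm_ring_1) set \<Rightarrow> 'a set" where
  "ideal_gen G = \<Inter>{J. is_ideal J \<and> G \<subseteq> J}"

definition ideal_prod :: "('a::comm_ring_1) set \<Rightarrow> 'a set \<Rightarrow> 'a set" where
  "ideal_prod I J = ideal_gen {a * b | a b. a \<in> I \<and> b \<in> J}"

fun ideal_pow :: "('a::comm_ring_1) set \<Rightarrow> nat \<Rightarrow> 'a set" where
  "ideal_pow I 0 = UNIV"
| "ideal_pow I (Suc n) = ideal_prod I (ideal_pow I n)"

definition colon :: "('a::comm_ring_1) set \<Rightarrow> 'a \<Rightarrow> 'a set" where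
  "colon I f = {g. g * f \<in> I}"

definition radical :: "('a::comm_ring_1) set \<Rightarrow> 'a set" where
  "radical I = {f. \<exists>n. f ^ n \<in> I}"

definition prime_ideal :: "('a::comm_ring_1) set \<Rightarrow> bool" where
  "prime_ideal P \<longleftrightarrow> is_ideal P \<and> P \<noteq> UNIV \<and> (\<forall>a b. a * b \<in> P \<longrightarrow> a \<in> P \<or> b \<in> P)"

definition primary_ideal :: "('a::comm_ring_1) set \<Rightarrow> bool" where
  "primary_ideal Q \<longleftrightarrow> is_ideal Q \<and> Q \<noteq> UNIV \<and>
     (\<forall>a b. a * b \<in> Q \<longrightarrow> a \<notin> Q \<longrightarrow> b \<in> radical Q)"

definition Ass :: "('a::comm_ring_1) set \<Rightarrow> 'a set set" where
  "Ass I = {P. prime_ideal P \<and> (\<exists>f. colon I f = P)}"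

definition mono_deg :: "('v::finite \<Rightarrow>\<^sub>0 nat) \<Rightarrow> nat" where
  "mono_deg \<alpha> = (\<Sum>v\<in>UNIV. Poly_Mapping.lookup \<alpha> v)"

text \<open>f \<in> S_k: f is homogeneous of degree k (standard grading, 0 belongs to every S_k).\<close>
definition homogeneous :: "nat \<Rightarrow> ('v::finite, 'k::field) mpoly \<Rightarrow> bool" where
  "homogeneous k f \<longleftrightarrow> (\<forall>\<alpha>\<in>Poly_Mapping.keys f. mono_deg \<alpha> = k)"

definition var :: "'v \<Rightarrow> ('v, 'k::field) mpoly" where
  "var v = Poly_Mapping.single (Poly_Mapping.single v 1) 1"

definition is_monomial :: "('v, 'k::field) mpoly \<Rightarrow> bool" where
  "is_monomial f \<longleftrightarrow> (\<exists>\<alpha>. f = Poly_Mapping.single \<alpha> 1)"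

definition monomial_ideal :: "('v, 'k::field) mpoly set \<Rightarrow> bool" where
  "monomial_ideal I \<longleftrightarrow> (\<exists>G. (\<forall>g\<in>G. is_monomial g) \<and> I = ideal_gen G)"

definition max_ideal :: "('v, 'k::field) mpoly set" where
  "max_ideal = ideal_gen (range var)"

definition m_primary :: "('v, 'k::field) mpoly set \<Rightarrow> bool" where
  "m_primary I \<longleftrightarrow> primary_ideal I \<and> radical I = max_ideal"

definition v_number :: "('v::finite, 'k::field) mpoly set \<Rightarrow> nat" where
  "v_number I = (LEAST k. \<exists>f P. homogeneous k f \<and> P \<in> Ass I \<and> colon I f = P)"

end

theory Submission
  imports Defs
begin

lemma pm_add_eq_0: "(l::'v \<Rightarrow>\<^sub>0 nat) + q = 0 \<longleftrightarrow> l = 0 \<and> q = 0"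
  by (metis add_is_0 lookup_add lookup_zero poly_mapping_eqI)

lemma lookup_mult_0:
  fixes a b :: "('v, 'k::field) mpoly"
  shows "Poly_Mapping.lookup (a * b) 0 = Poly_Mapping.lookup a 0 * Poly_Mapping.lookup b 0"
proof -
  have H: "\<And>aa. (\<Sum>q. Poly_Mapping.lookup b q when aa = 0 \<and> q = 0) = (Poly_Mapping.lookup b 0 when aa = 0)"
    by (simp add: when_def)
  have "Poly_Mapping.lookup (a * b) 0 = (\<Sum>aa. Poly_Mapping.lookup a aa * (\<Sum>q. Poly_Mapping.lookup b q when aa = 0 \<and> q = 0))"
    unfolding lookup_mult by (simp add: pm_add_eq_0 eq_commute[of 0])
  also have "\<dots> = (\<Sum>aa. Poly_Mapping.lookup a aa * (Poly_Mapping.lookup b 0 when aa = 0))"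
    by (simp only: H)
  also have "\<dots> = Poly_Mapping.lookup a 0 * Poly_Mapping.lookup b 0"
    by (simp add: mult_when)
  finally show ?thesis by simp
qed

lemma lookup_single_mult: "Poly_Mapping.lookup (Poly_Mapping.single \<beta> c * (f::('v, 'k::field) mpoly)) (\<beta> + \<alpha>) = c * Poly_Mapping.lookup f \<alpha>"
  unfolding lookup_mult lookup_single
  by (simp add: when_mult mult_when)

lemma sum_monos: "(f::('a \<Rightarrow>\<^sub>0 'b::comm_monoid_add)) = (\<Sum>\<alpha>\<in>Poly_Mapping.keys f. Poly_Mapping.single \<alpha> (Poly_Mapping.lookup f \<alpha>))"
  by (rule poly_mapping_eqI) (simp add: lookup_sum lookup_single when_def in_keys_iff)

lemma single_split:
  assumes "m \<le> Poly_Mapping.lookup (\<alpha>::'v \<Rightarrow>\<^sub>0 nat) v"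
  shows "\<alpha> = Poly_Mapping.single v m + (\<alpha> - Poly_Mapping.single v m)"
  by (rule poly_mapping_eqI) (use assms in \<open>auto simp: lookup_add lookup_minus lookup_single when_def\<close>)

section \<open>Ideals\<close>

lemma is_ideal_gen: "is_ideal (ideal_gen G)"
  unfolding ideal_gen_def is_ideal_def by auto

lemma gen_sub: "G \<subseteq> ideal_gen G"
  unfolding ideal_gen_def by auto

lemma gen_least: "is_ideal J \<Longrightarrow> G \<subseteq> J \<Longrightarrow> ideal_gen G \<subseteq> J"
  unfolding ideal_gen_def by auto

lemma ideal_multl: "is_ideal J \<Longrightarrow> a \<in> J \<Longrightarrow> r * a \<in> J"
  unfolding is_ideal_def by auto

lemma ideal_multr: "is_ideal J \<Longrightarrow> a \<in> J \<Longrightarrow> a * r \<in> J"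
  unfolding is_ideal_def by (metis mult.commute)

lemma ideal_add: "is_ideal J \<Longrightarrow> a \<in> J \<Longrightarrow> b \<in> J \<Longrightarrow> a + b \<in> J"
  unfolding is_ideal_def by auto

lemma ideal_zero: "is_ideal J \<Longrightarrow> 0 \<in> J"
  unfolding is_ideal_def by auto

lemma ideal_diff: "is_ideal J \<Longrightarrow> a \<in> J \<Longrightarrow> b \<in> J \<Longrightarrow> a - b \<in> J"
proof -
  assume J: "is_ideal J" "a \<in> J" "b \<in> J"
  have "a - b = a + (-1) * b" by simp
  then show ?thesis using J ideal_add ideal_multl by metis
qed

lemma ideal_sum: "is_ideal J \<Longrightarrow> (\<And>i. i \<in> A \<Longrightarrow> f i \<in> J) \<Longrightarrow> sum f A \<in> J"
proof (induction A rule: infinite_finite_induct)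
  case (infinite A)
  then show ?case by (simp add: ideal_zero)
next
  case empty
  then show ?case by (simp add: ideal_zero)
next
  case (insert x F)
  then show ?case by (simp add: ideal_add)
qed

lemma ideal_one_UNIV: "is_ideal J \<Longrightarrow> 1 \<in> J \<Longrightarrow> J = UNIV"
proof -
  assume J: "is_ideal J" "1 \<in> J"
  have "r \<in> J" for r using ideal_multl[OF J, of r] by simp
  then show ?thesis by blast
qed

lemma prod_mem: "a \<in> I \<Longrightarrow> b \<in> J \<Longrightarrow> a * b \<in> ideal_prod I J"
proof -
  assume "a \<in> I" "b \<in> J"
  then have "a * b \<in> {a * b | a b. a \<in> I \<and> b \<in> J}" by blast
  then show ?thesis unfolding ideal_prod_def using gen_sub by (rule subsetD[rotated])
qed

lemma prod_least: "is_ideal K \<Longrightarrow> (\<And>a b. a \<in> I \<Longrightarrow> b \<in> J \<Longrightarrow> a * b \<in> K) \<Longrightarrow> ideal_prod I J \<subseteq> K"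
  unfolding ideal_prod_def by (rule gen_least) blast+

lemma ideal_pow_ideal: "is_ideal (ideal_pow I m)"
proof (cases m)
  case 0
  then show ?thesis by (simp add: is_ideal_def)
next
  case (Suc n)
  then show ?thesis by (simp add: ideal_prod_def is_ideal_gen)
qed

lemma pow_mem: "a \<in> I \<Longrightarrow> a ^ m \<in> ideal_pow I m"
proof (induction m)
  case 0
  then show ?case by simp
next
  case (Suc m)
  then show ?case by (simp add: prod_mem)
qed

lemma colon_ideal: "is_ideal J \<Longrightarrow> is_ideal (colon J g)"
  unfolding is_ideal_def colon_def by (auto simp: distrib_right mult.assoc)

lemma sub_colon: "is_ideal J \<Longrightarrow> J \<subseteq> colon J g"
  unfolding colon_def using ideal_multr by blast

lemma prime_pow: "prime_ideal P \<Longrightarrow> x ^ n \<in> P \<Longrightarrow> x \<in> P"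
proof (induction n)
  case 0
  then show ?case unfolding prime_ideal_def using ideal_one_UNIV by auto
next
  case (Suc n)
  then show ?case unfolding prime_ideal_def by auto
qed

section \<open>Degrees\<close>

definition D :: "nat \<Rightarrow> ('v::finite, 'k::field) mpoly set" where
  "D n = {g. \<forall>\<alpha>\<in>Poly_Mapping.keys g. n \<le> mono_deg \<alpha>}"

lemma mono_deg_add: "mono_deg (a + b) = mono_deg a + mono_deg b"
  unfolding mono_deg_def by (simp add: lookup_add sum.distrib)

lemma mono_deg_single: "mono_deg (Poly_Mapping.single (v::'v::finite) k) = k"
  unfolding mono_deg_def by (simp add: lookup_single when_def)

lemma mono_deg_zero: "mono_deg (0::'v::finite \<Rightarrow>\<^sub>0 nat) = 0"
  unfolding mono_deg_def by simp

lemma D_ideal: "is_ideal (D n :: ('v::finite, 'k::field) mpoly set)"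
  unfolding is_ideal_def D_def
proof (intro conjI ballI allI)
  show "0 \<in> {g :: ('v, 'k) mpoly. \<forall>\<alpha>\<in>Poly_Mapping.keys g. n \<le> mono_deg \<alpha>}" by simp
next
  fix a b :: "('v, 'k) mpoly"
  assume "a \<in> {g. \<forall>\<alpha>\<in>Poly_Mapping.keys g. n \<le> mono_deg \<alpha>}" "b \<in> {g. \<forall>\<alpha>\<in>Poly_Mapping.keys g. n \<le> mono_deg \<alpha>}"
  then show "a + b \<in> {g. \<forall>\<alpha>\<in>Poly_Mapping.keys g. n \<le> mono_deg \<alpha>}"
    using keys_add[of a b] by auto
next
  fix a r :: "('v, 'k) mpoly"
  assume a: "a \<in> {g. \<forall>\<alpha>\<in>Poly_Mapping.keys g. n \<le> mono_deg \<alpha>}"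
  show "r * a \<in> {g. \<forall>\<alpha>\<in>Poly_Mapping.keys g. n \<le> mono_deg \<alpha>}"
  proof
    show "\<forall>\<alpha>\<in>Poly_Mapping.keys (r * a). n \<le> mono_deg \<alpha>"
    proof
      fix \<alpha> assume "\<alpha> \<in> Poly_Mapping.keys (r * a)"
      then obtain \<beta> \<gamma> where "\<alpha> = \<beta> + \<gamma>" "\<gamma> \<in> Poly_Mapping.keys a"
        using keys_mult by blast
      then show "n \<le> mono_deg \<alpha>" using a by (auto simp: mono_deg_add)
    qed
  qed
qed

lemma D_mult: "a \<in> D 1 \<Longrightarrow> b \<in> D n \<Longrightarrow> a * b \<in> D (Suc n)"
  unfolding D_def
proof (intro CollectI ballI)
  fix \<alpha> assume a: "a \<in> {g. \<forall>\<alpha>\<in>Poly_Mapping.keys g. 1 \<le> mono_deg \<alpha>}"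
    and b: "b \<in> {g. \<forall>\<alpha>\<in>Poly_Mapping.keys g. n \<le> mono_deg \<alpha>}"
    and "\<alpha> \<in> Poly_Mapping.keys (a * b)"
  then obtain \<beta> \<gamma> where "\<alpha> = \<beta> + \<gamma>" "\<beta> \<in> Poly_Mapping.keys a" "\<gamma> \<in> Poly_Mapping.keys b"
    using keys_mult by blast
  then show "Suc n \<le> mono_deg \<alpha>" using a b by (fastforce simp: mono_deg_add)
qed

lemma var_D1: "var v \<in> D 1"
  unfolding var_def D_def by (simp add: mono_deg_single)

lemma max_D1: "max_ideal \<subseteq> D 1"
  unfolding max_ideal_def using var_D1 by (intro gen_least D_ideal) auto

lemma D1_lookup0: "g \<in> D 1 \<Longrightarrow> Poly_Mapping.lookup g 0 = 0"
proof (rule ccontr)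
  assume "g \<in> D 1" "Poly_Mapping.lookup g 0 \<noteq> 0"
  then have "1 \<le> mono_deg (0::'a \<Rightarrow>\<^sub>0 nat)" unfolding D_def by (auto simp: in_keys_iff)
  then show False by (simp add: mono_deg_zero)
qed

lemma D_zero: "D 0 = UNIV"
  unfolding D_def by auto

lemma pow_D: "I \<subseteq> D 1 \<Longrightarrow> ideal_pow I m \<subseteq> D m"
proof (induction m)
  case 0
  then show ?case by (simp add: D_zero)
next
  case (Suc m)
  have "ideal_prod I (ideal_pow I m) \<subseteq> D (Suc m)"
    by (rule prod_least[OF D_ideal]) (use D_mult Suc in blast)
  then show ?case by simp
qed

lemma one_notin_D: "(1::('v::finite, 'k::field) mpoly) \<notin> D (Suc n)"
  unfolding D_def by (auto simp: mono_deg_zero)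

section \<open>The maximal ideal\<close>

lemma var_max: "var v \<in> max_ideal"
  unfolding max_ideal_def using gen_sub by blast

lemma lookup0_in_max:
  fixes f :: "('v::finite, 'k::field) mpoly"
  assumes "Poly_Mapping.lookup f 0 = 0"
  shows "f \<in> max_ideal"
proof -
  have "(\<Sum>\<alpha>\<in>Poly_Mapping.keys f. Poly_Mapping.single \<alpha> (Poly_Mapping.lookup f \<alpha>)) \<in> max_ideal"
  proof (rule ideal_sum)
    show "is_ideal (max_ideal :: ('v, 'k) mpoly set)" unfolding max_ideal_def by (rule is_ideal_gen)
  next
    fix \<alpha> assume a: "\<alpha> \<in> Poly_Mapping.keys f"
    then have "\<alpha> \<noteq> 0" using assms by (auto simp: in_keys_iff)
    then obtain v where v: "Poly_Mapping.lookup \<alpha> v \<noteq> 0"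
      using poly_mapping_eqI[of \<alpha> 0] by auto
    then have sp: "\<alpha> = Poly_Mapping.single v 1 + (\<alpha> - Poly_Mapping.single v 1)"
      by (intro single_split) simp
    have "Poly_Mapping.single \<alpha> (Poly_Mapping.lookup f \<alpha>) =
       Poly_Mapping.single (\<alpha> - Poly_Mapping.single v 1) (Poly_Mapping.lookup f \<alpha>) * var v"
      unfolding var_def mult_single using sp by (simp add: add.commute)
    then show "Poly_Mapping.single \<alpha> (Poly_Mapping.lookup f \<alpha>) \<in> max_ideal"
      using ideal_multl[OF is_ideal_gen] var_max unfolding max_ideal_def by metis
  qed
  then show ?thesis using sum_monos[of f] by simp
qed

lemma max_ideal_eq: "(max_ideal :: ('v::finite, 'k::field) mpoly set) = {f. Poly_Mapping.lookup f 0 = 0}"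
  using lookup0_in_max max_D1 D1_lookup0 by blast

lemma prime_max: "prime_ideal (max_ideal :: ('v::finite, 'k::field) mpoly set)"
proof -
  have "is_ideal (max_ideal :: ('v, 'k) mpoly set)" unfolding max_ideal_def by (rule is_ideal_gen)
  moreover have "(1::('v, 'k) mpoly) \<notin> max_ideal" by (simp add: max_ideal_eq)
  moreover have "\<forall>a b. a * b \<in> (max_ideal :: ('v, 'k) mpoly set) \<longrightarrow> a \<in> max_ideal \<or> b \<in> max_ideal"
    by (simp add: max_ideal_eq lookup_mult_0)
  ultimately show ?thesis unfolding prime_ideal_def by blast
qed

lemma maximal:
  fixes P :: "('v::finite, 'k::field) mpoly set"
  assumes P: "is_ideal P" "max_ideal \<subseteq> P" "P \<noteq> UNIV"
  shows "P = max_ideal"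
proof (rule ccontr)
  assume "P \<noteq> max_ideal"
  then obtain p where p: "p \<in> P" "Poly_Mapping.lookup p 0 \<noteq> 0"
    using P(2) max_ideal_eq by blast
  define c where "c = Poly_Mapping.lookup p 0"
  have "p - Poly_Mapping.single 0 c \<in> max_ideal"
    by (simp add: max_ideal_eq lookup_minus c_def)
  then have "p - (p - Poly_Mapping.single 0 c) \<in> P"
    using P p ideal_diff by blast
  then have "Poly_Mapping.single 0 c \<in> P" by simp
  then have "Poly_Mapping.single 0 (1/c) * Poly_Mapping.single 0 c \<in> P"
    using P ideal_multl by blast
  moreover have "Poly_Mapping.single 0 (1/c) * Poly_Mapping.single 0 c = (1 :: ('v, 'k) mpoly)"
    using p(2) by (simp add: mult_single c_def)
  ultimately show False using P ideal_one_UNIV by auto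
qed


lemma var_pow: "var v ^ k = (Poly_Mapping.single (Poly_Mapping.single v k) 1 :: ('v, 'k::field) mpoly)"
proof (induction k)
  case 0
  then show ?case by simp
next
  case (Suc k)
  have "Poly_Mapping.single v (Suc k) = Poly_Mapping.single v 1 + Poly_Mapping.single v k"
    using single_add[of v 1 k] by simp
  then show ?case using Suc by (simp add: var_def mult_single)
qed

lemma pigeon:
  fixes \<alpha> :: "'v::finite \<Rightarrow>\<^sub>0 nat"
  assumes "card (UNIV :: 'v set) * K \<le> mono_deg \<alpha>"
  shows "\<exists>v. K \<le> Poly_Mapping.lookup \<alpha> v"
proof (rule ccontr)
  assume "\<not> ?thesis"
  then have "\<forall>v\<in>UNIV. Poly_Mapping.lookup \<alpha> v < K" by (simp add: not_le)
  then have "(\<Sum>v\<in>UNIV. Poly_Mapping.lookup \<alpha> v) < (\<Sum>v\<in>(UNIV::'v set). K)"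
    by (intro sum_strict_mono) auto
  then show False using assms unfolding mono_deg_def by simp
qed

lemma existence:
  fixes J :: "('v::finite, 'k::field) mpoly set"
  assumes J: "is_ideal J" "1 \<notin> J"
    and B: "\<And>\<alpha>. B \<le> mono_deg \<alpha> \<Longrightarrow> Poly_Mapping.single \<alpha> 1 \<in> J"
  shows "\<exists>d \<alpha>. mono_deg \<alpha> = d \<and> colon J (Poly_Mapping.single \<alpha> 1) = max_ideal"
proof -
  define S where "S = {d. \<exists>\<alpha>. mono_deg \<alpha> = d \<and> Poly_Mapping.single \<alpha> 1 \<notin> J}"
  have "0 \<in> S" unfolding S_def using J(2) by (intro CollectI exI[of _ 0]) (simp add: mono_deg_zero)
  have "S \<subseteq> {..<B}"
  proof
    fix x assume "x \<in> S"
    then obtain \<gamma> where "mono_deg \<gamma> = x" "Poly_Mapping.single \<gamma> 1 \<notin> J" unfolding S_def by blast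
    then show "x \<in> {..<B}" using B[of \<gamma>] by force
  qed
  then have fin: "finite S" by (rule finite_subset) simp
  define d where "d = Max S"
  have "d \<in> S" unfolding d_def using fin \<open>0 \<in> S\<close> by (intro Max_in) auto
  then obtain \<alpha> where \<alpha>: "mono_deg \<alpha> = d" "Poly_Mapping.single \<alpha> 1 \<notin> J" unfolding S_def by blast
  have vin: "var v \<in> colon J (Poly_Mapping.single \<alpha> 1)" for v
  proof -
    have "mono_deg (\<alpha> + Poly_Mapping.single v 1) = Suc d"
      using \<alpha> by (simp add: mono_deg_add mono_deg_single)
    moreover have "Suc d \<notin> S"
    proof
      assume "Suc d \<in> S"
      then have "Suc d \<le> d" unfolding d_def using fin by (simp add: Max_ge)
      then show False by simp
    qed
    ultimately have "Poly_Mapping.single (\<alpha> + Poly_Mapping.single v 1) 1 \<in> J"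
      unfolding S_def by blast
    then show ?thesis unfolding colon_def var_def by (simp add: mult_single add.commute)
  qed
  have "max_ideal \<subseteq> colon J (Poly_Mapping.single \<alpha> 1)"
    unfolding max_ideal_def using vin by (intro gen_least colon_ideal J(1)) auto
  moreover have "colon J (Poly_Mapping.single \<alpha> 1) \<noteq> UNIV"
  proof
    assume "colon J (Poly_Mapping.single \<alpha> 1) = UNIV"
    then have "1 \<in> colon J (Poly_Mapping.single \<alpha> 1)" by simp
    then show False using \<alpha>(2) unfolding colon_def by simp
  qed
  ultimately have "colon J (Poly_Mapping.single \<alpha> 1) = max_ideal"
    by (intro maximal colon_ideal J(1))
  then show ?thesis by blast
qed

theorem proposition4p5:
  fixes I :: "('v::finite, 'k::field) mpoly set"
  assumes "monomial_ideal I" and "m_primary I"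
  shows "\<exists>s0. \<forall>s\<ge>s0. v_number (ideal_pow I (s + 1)) \<ge> v_number I"
proof -
  have Iid: "is_ideal I" and rad: "radical I = max_ideal"
    using assms(2) unfolding m_primary_def primary_ideal_def by auto
  have "I \<subseteq> radical I" unfolding radical_def by (auto intro: exI[of _ 1])
  then have ID1: "I \<subseteq> D 1" using rad max_D1 by blast
  have "\<forall>v. \<exists>n. var v ^ n \<in> I"
  proof
    fix v
    have "var v \<in> radical I" using var_max rad by simp
    then show "\<exists>n. var v ^ n \<in> I" unfolding radical_def by simp
  qed
  then obtain n where n: "\<And>v. var v ^ n v \<in> I" by metis
  define N where "N = (\<Sum>v\<in>UNIV. n v)"
  have NI: "var v ^ N \<in> I" for v
  proof -
    have "n v \<le> N" unfolding N_def by (rule member_le_sum) auto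
    then have "var v ^ N = var v ^ (N - n v) * var v ^ n v"
      by (metis le_add_diff_inverse2 power_add)
    then show ?thesis using ideal_multl[OF Iid n] by metis
  qed
  have main: "s \<le> v_number (ideal_pow I (s + 1))" for s
  proof -
    define J where "J = ideal_pow I (Suc s)"
    have Jid: "is_ideal J" unfolding J_def by (rule ideal_pow_ideal)
    have JD: "J \<subseteq> D (Suc s)" unfolding J_def using pow_D[OF ID1] by blast
    have one: "1 \<notin> J" using JD one_notin_D by blast
    have varJ: "var v ^ (N * Suc s) \<in> J" for v
      unfolding J_def power_mult using pow_mem[OF NI] by blast
    have B: "Poly_Mapping.single \<alpha> 1 \<in> J" if a: "card (UNIV :: 'v set) * (N * Suc s) \<le> mono_deg \<alpha>" for \<alpha>
    proof -
      obtain v where v: "N * Suc s \<le> Poly_Mapping.lookup \<alpha> v" using pigeon[OF a] by blast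
      have "Poly_Mapping.single \<alpha> (1::'k) = Poly_Mapping.single (\<alpha> - Poly_Mapping.single v (N * Suc s)) 1 * var v ^ (N * Suc s)"
        unfolding var_pow mult_single using single_split[OF v] by (simp add: add.commute)
      then show ?thesis using ideal_multl[OF Jid varJ] by metis
    qed
    obtain d \<alpha> where d: "mono_deg \<alpha> = d" "colon J (Poly_Mapping.single \<alpha> 1) = max_ideal"
      using existence[OF Jid one B] by blast
    define Q where "Q = (\<lambda>k. \<exists>f P. homogeneous k f \<and> P \<in> Ass J \<and> colon J f = P)"
    have "Q d" unfolding Q_def Ass_def homogeneous_def
      using d prime_max by (intro exI[of _ "Poly_Mapping.single \<alpha> 1"] exI[of _ max_ideal]) auto
    then have QL: "Q (Least Q)" by (rule LeastI)
    have lower: "s \<le> k" if "Q k" for k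
    proof -
      obtain f P where f: "homogeneous k f" "prime_ideal P" "colon J f = P"
        using \<open>Q k\<close> unfolding Q_def Ass_def by blast
      have "f \<noteq> 0"
      proof
        assume "f = 0"
        then have "P = UNIV" using f(3) ideal_zero[OF Jid] unfolding colon_def by auto
        then show False using f(2) unfolding prime_ideal_def by auto
      qed
      then obtain \<beta> where \<beta>: "\<beta> \<in> Poly_Mapping.keys f" by fastforce
      obtain v :: 'v where True by blast
      have "var v ^ (N * Suc s) \<in> P" using varJ sub_colon[OF Jid] f(3) by blast
      then have "var v \<in> P" using prime_pow f(2) by blast
      then have "var v * f \<in> J" using f(3) unfolding colon_def by blast
      then have inD: "var v * f \<in> D (Suc s)" using JD by blast
      have "Poly_Mapping.lookup (var v * f) (Poly_Mapping.single v 1 + \<beta>) = Poly_Mapping.lookup f \<beta>"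
        unfolding var_def by (simp add: lookup_single_mult)
      then have "Poly_Mapping.single v 1 + \<beta> \<in> Poly_Mapping.keys (var v * f)"
        using \<beta> by (simp add: in_keys_iff)
      then have "Suc s \<le> mono_deg (Poly_Mapping.single v 1 + \<beta>)" using inD unfolding D_def by blast
      moreover have "mono_deg \<beta> = k" using f(1) \<beta> unfolding homogeneous_def by blast
      ultimately show ?thesis by (simp add: mono_deg_add mono_deg_single)
    qed
    have "v_number (ideal_pow I (s + 1)) = Least Q"
      unfolding v_number_def Q_def J_def by simp
    then show ?thesis using lower[OF QL] by simp
  qed
  show ?thesis
    by (rule exI[of _ "v_number I"]) (use main order_trans in blast)
qed

end
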